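(* Let $\mathbf p$ be a Nash-routing of a max game on a graph with $n\ge2$ nodes, with $C=C(\mathbf p)$, $D=D(\mathbf p)$, and let $\mathbf p^*$ be an optimal routing with $C^*=C(\mathbf p^* )$. If $C\ge D+2\lg n+2$, then $C<2LC^*+2\lg n$.
   Context: A routing game $(\mathbf N,G,\mathcal P)$: players $\{1,\dots,N\}$ ($N\ge1$), a simple graph $G=(V,E)$ with $n=|V|$ nodes, and for each player $i$ a nonempty finite set $\mathcal P_i$ of paths from $u_i$ to $v_i$; $L=\max_{p\in\bigcup_i\mathcal P_i}|p|$ (path length = number of edges). A routing is $\mathbf p=[p_1,\dots,p_N]$, $p_i\in\mathcal P_i$. $C_e(\mathbf p)$ = number of players whose path uses edge $e$; $C_i(\mathbf p)=\max_{e\in p_i}C_e(\mathbf p)$; $D_i(\mathbf p)=|p_i|$; $C(\mathbf p)=\max_eC_e(\mathbf p)$; $D(\mathbf p)=\max_i|p_i|$. Max game: player cost $pc_i=\max(C_i,D_i)$, social cost $SC=\max(C,D)$. A Nash-routing is one where no player can strictly lower $pc_i$ by unilaterally changing its path within $\mathcal P_i$; an optimal routing minimizes $SC$. $\lg=\log_2$. *)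

theory Defs
  imports Complex_Main
begin

definition simple_graph :: "'v set \<Rightarrow> 'v set set \<Rightarrow> bool" where
  "simple_graph V E \<longleftrightarrow> finite V \<and> (\<forall>e\<in>E. \<exists>a b. a \<noteq> b \<and> a \<in> V \<and> b \<in> V \<and> e = {a, b})"

definition is_path :: "'v set \<Rightarrow> 'v set set \<Rightarrow> 'v \<Rightarrow> 'v \<Rightarrow> 'v list \<Rightarrow> bool" where
  "is_path V E x y p \<longleftrightarrow> p \<noteq> [] \<and> hd p = x \<and> last p = y \<and> distinct p \<and> set p \<subseteq> V \<and>
     (\<forall>k. Suc k < length p \<longrightarrow> {p ! k, p ! Suc k} \<in> E)"

definition path_edges :: "'v list \<Rightarrow> 'v set set" where
  "path_edges p = {{p ! k, p ! Suc k} | k. Suc k < length p}"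

definition path_len :: "'v list \<Rightarrow> nat" where
  "path_len p = length p - 1"

definition routing_game ::
  "'v set \<Rightarrow> 'v set set \<Rightarrow> nat \<Rightarrow> (nat \<Rightarrow> 'v) \<Rightarrow> (nat \<Rightarrow> 'v) \<Rightarrow> (nat \<Rightarrow> 'v list set) \<Rightarrow> bool" where
  "routing_game V E N src dst P \<longleftrightarrow> simple_graph V E \<and> N \<ge> 1 \<and>
     (\<forall>i<N. finite (P i) \<and> P i \<noteq> {} \<and> (\<forall>p\<in>P i. is_path V E (src i) (dst i) p))"

definition is_routing :: "nat \<Rightarrow> (nat \<Rightarrow> 'v list set) \<Rightarrow> (nat \<Rightarrow> 'v list) \<Rightarrow> bool" where
  "is_routing N P r \<longleftrightarrow> (\<forall>i<N. r i \<in> P i)"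

definition edge_cong :: "nat \<Rightarrow> (nat \<Rightarrow> 'v list) \<Rightarrow> 'v set \<Rightarrow> nat" where
  "edge_cong N r e = card {i. i < N \<and> e \<in> path_edges (r i)}"

definition player_cong :: "nat \<Rightarrow> (nat \<Rightarrow> 'v list) \<Rightarrow> nat \<Rightarrow> nat" where
  "player_cong N r i = Max (insert 0 (edge_cong N r ` path_edges (r i)))"

definition player_cost :: "nat \<Rightarrow> (nat \<Rightarrow> 'v list) \<Rightarrow> nat \<Rightarrow> nat" where
  "player_cost N r i = max (player_cong N r i) (path_len (r i))"

definition congestion :: "'v set set \<Rightarrow> nat \<Rightarrow> (nat \<Rightarrow> 'v list) \<Rightarrow> nat" where
  "congestion E N r = Max (insert 0 (edge_cong N r ` E))"

definition dilation :: "nat \<Rightarrow> (nat \<Rightarrow> 'v list) \<Rightarrow> nat" where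
  "dilation N r = Max (insert 0 ((\<lambda>i. path_len (r i)) ` {..<N}))"

definition social_cost :: "'v set set \<Rightarrow> nat \<Rightarrow> (nat \<Rightarrow> 'v list) \<Rightarrow> nat" where
  "social_cost E N r = max (congestion E N r) (dilation N r)"

definition is_nash :: "nat \<Rightarrow> (nat \<Rightarrow> 'v list set) \<Rightarrow> (nat \<Rightarrow> 'v list) \<Rightarrow> bool" where
  "is_nash N P r \<longleftrightarrow> is_routing N P r \<and>
     (\<forall>i<N. \<forall>q\<in>P i. player_cost N r i \<le> player_cost N (r(i := q)) i)"

definition is_optimal :: "'v set set \<Rightarrow> nat \<Rightarrow> (nat \<Rightarrow> 'v list set) \<Rightarrow> (nat \<Rightarrow> 'v list) \<Rightarrow> bool" where
  "is_optimal E N P r \<longleftrightarrow> is_routing N P r \<and>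
     (\<forall>r'. is_routing N P r' \<longrightarrow> social_cost E N r \<le> social_cost E N r')"

definition max_path_len :: "nat \<Rightarrow> (nat \<Rightarrow> 'v list set) \<Rightarrow> nat" where
  "max_path_len N P = Max (path_len ` (\<Union>i<N. P i))"

end

theory Submission
  imports Defs
begin



lemma pe_image: "path_edges q = (\<lambda>k. {q!k, q!Suc k}) ` {..< length q - 1}"
  unfolding path_edges_def by auto

lemma finite_pe[simp]: "finite (path_edges q)"
  unfolding pe_image by simp

lemma card_pe: "card (path_edges q) \<le> path_len q"
  unfolding pe_image path_len_def using card_image_le by (metis card_lessThan finite_lessThan)

lemma pe_empty: "path_edges q = {} \<Longrightarrow> path_len q = 0"
  unfolding path_edges_def path_len_def
proof (rule ccontr)
  assume a: "{{q ! k, q ! Suc k} |k. Suc k < length q} = {}" "length q - 1 \<noteq> 0"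
  have "Suc 0 < length q" using a(2) by linarith
  thus False using a(1) by blast
qed

lemma pe_sub: "is_path V E x y q \<Longrightarrow> path_edges q \<subseteq> E"
  unfolding is_path_def path_edges_def by auto

lemma edge_cong_le: "finite E \<Longrightarrow> e \<in> E \<Longrightarrow> edge_cong N r e \<le> congestion E N r"
  unfolding congestion_def by (simp add: Max_ge_iff)

lemma cong_le_player: "e \<in> path_edges (r i) \<Longrightarrow> edge_cong N r e \<le> player_cong N r i"
  unfolding player_cong_def by (simp add: Max_ge_iff)

lemma player_cong_witness:
  assumes "t \<le> player_cong N r i" "0 < t"
  shows "\<exists>e\<in>path_edges (r i). t \<le> edge_cong N r e"
proof -
  have "player_cong N r i \<in> insert 0 (edge_cong N r ` path_edges (r i))"
    unfolding player_cong_def by (rule Max_in) auto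
  thus ?thesis using assms by auto
qed

lemma edge_cong_upd: "edge_cong N (r(i:=q)) e \<le> edge_cong N r e + 1"
proof -
  have "{i'. i' < N \<and> e \<in> path_edges ((r(i:=q)) i')} \<subseteq> insert i {i'. i' < N \<and> e \<in> path_edges (r i')}"
    by auto
  hence "card {i'. i' < N \<and> e \<in> path_edges ((r(i:=q)) i')} \<le> card (insert i {i'. i' < N \<and> e \<in> path_edges (r i')})"
    by (intro card_mono) auto
  also have "\<dots> \<le> card {i'. i' < N \<and> e \<in> path_edges (r i')} + 1"
    by (simp add: card_insert_le_m1 card_insert_if)
  finally show ?thesis unfolding edge_cong_def .
qed

lemma double_count:
  assumes "finite F"
  shows "(\<Sum>e\<in>F. edge_cong N r e) = (\<Sum>i<N. card (F \<inter> path_edges (r i)))"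
proof -
  have "(\<Sum>e\<in>F. edge_cong N r e) = (\<Sum>e\<in>F. \<Sum>i<N. if e \<in> path_edges (r i) then 1 else 0)"
  proof (rule sum.cong)
    fix e assume "e \<in> F"
    have "edge_cong N r e = card {i\<in>{..<N}. e \<in> path_edges (r i)}"
      unfolding edge_cong_def by (rule arg_cong[where f=card]) auto
    also have "\<dots> = (\<Sum>i<N. if e \<in> path_edges (r i) then 1 else 0)"
      by (simp add: sum.If_cases Int_def conj_commute)
    finally show "edge_cong N r e = (\<Sum>i<N. if e \<in> path_edges (r i) then 1 else 0)" .
  qed simp
  also have "\<dots> = (\<Sum>i<N. \<Sum>e\<in>F. if e \<in> path_edges (r i) then 1 else 0)"
    by (rule sum.swap)
  also have "\<dots> = (\<Sum>i<N. card (F \<inter> path_edges (r i)))"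
    using assms by (simp add: sum.If_cases)
  finally show ?thesis .
qed

lemma card_E_le: "simple_graph V E \<Longrightarrow> card E \<le> card V ^ 2"
proof -
  assume sg: "simple_graph V E"
  hence fV: "finite V" unfolding simple_graph_def by auto
  have "E \<subseteq> (\<lambda>(a,b). {a,b}) ` (V \<times> V)" using sg unfolding simple_graph_def by fastforce
  hence "card E \<le> card ((\<lambda>(a,b). {a,b}) ` (V \<times> V))" using fV by (intro card_mono) auto
  also have "\<dots> \<le> card (V \<times> V)" using fV by (intro card_image_le) auto
  finally show ?thesis by (simp add: card_cartesian_product power2_eq_square)
qed

lemma finite_E: "simple_graph V E \<Longrightarrow> finite E"
proof -
  assume sg: "simple_graph V E"
  hence fV: "finite V" unfolding simple_graph_def by auto
  have "E \<subseteq> (\<lambda>(a,b). {a,b}) ` (V \<times> V)" using sg unfolding simple_graph_def by fastforce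
  thus ?thesis using fV finite_subset by blast
qed


theorem mainTheorem5:
  fixes V :: "'v set" and E :: "'v set set" and N :: nat
    and src dst :: "nat \<Rightarrow> 'v" and P :: "nat \<Rightarrow> 'v list set"
    and p pstar :: "nat \<Rightarrow> 'v list"
  assumes "routing_game V E N src dst P"
    and "card V \<ge> 2"
    and "is_nash N P p"
    and "is_optimal E N P pstar"
    and "real (congestion E N p) \<ge> real (dilation N p) + 2 * log 2 (card V) + 2"
  shows "real (congestion E N p)
           < 2 * real (max_path_len N P) * real (congestion E N pstar) + 2 * log 2 (card V)"
proof (rule ccontr)
  let ?C = "congestion E N p" and ?D = "dilation N p" and ?Cs = "congestion E N pstar"
    and ?L = "max_path_len N P" and ?n = "card V"
  assume "\<not> ?thesis"
  hence H: "2 * real ?L * real ?Cs + 2 * log 2 ?n \<le> real ?C" by simp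
  have rg: "simple_graph V E" "N \<ge> 1" "\<And>i. i<N \<Longrightarrow> finite (P i) \<and> P i \<noteq> {} \<and> (\<forall>q\<in>P i. is_path V E (src i) (dst i) q)"
    using assms(1) unfolding routing_game_def by auto
  have fE: "finite E" using finite_E[OF rg(1)] .
  have nash: "\<And>i q. i < N \<Longrightarrow> q \<in> P i \<Longrightarrow> player_cost N p i \<le> player_cost N (p(i := q)) i"
    and pP: "\<And>i. i<N \<Longrightarrow> p i \<in> P i"
    using assms(3) unfolding is_nash_def is_routing_def by auto
  have psP: "\<And>i. i<N \<Longrightarrow> pstar i \<in> P i"
    using assms(4) unfolding is_optimal_def is_routing_def by auto
  have finU: "finite (\<Union>i<N. P i)" using rg(3) by auto
  have lenL: "\<And>i q. i<N \<Longrightarrow> q \<in> P i \<Longrightarrow> path_len q \<le> ?L"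
    unfolding max_path_len_def using finU by (intro Max_ge) auto
  have lenD: "\<And>i. i<N \<Longrightarrow> path_len (p i) \<le> ?D"
    unfolding dilation_def by (intro Max_ge) auto
  have DL: "?D \<le> ?L"
    unfolding dilation_def using lenL pP by (intro Max.boundedI) auto
  have logn: "1 \<le> log 2 ?n" using assms(2) by simp
  have Cbig: "2 * log 2 ?n + 2 \<le> real ?C" using assms(5) by simp
  define Ej where "Ej j = {e\<in>E. ?C \<le> edge_cong N p e + j}" for j
  have fEj: "finite (Ej j)" for j using fE unfolding Ej_def by auto
  have step: "card (Ej j) * (?C - j) \<le> card (Ej (Suc j)) * ?Cs * ?D"
    and CjL: "2 * ?L * ?Cs + j \<le> ?C" and jC: "j < ?C"
    if hj: "real j \<le> 2 * log 2 ?n" for j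
  proof -
    show CjL: "2 * ?L * ?Cs + j \<le> ?C"
    proof -
      have "real (2 * ?L * ?Cs + j) \<le> real ?C" using H hj by simp
      thus ?thesis by linarith
    qed
    show jC: "j < ?C"
    proof -
      have "real j < real ?C" using hj Cbig by simp
      thus ?thesis by linarith
    qed
    define A where "A = {i. i<N \<and> path_edges (p i) \<inter> Ej j \<noteq> {}}"
    define B where "B = {i. i<N \<and> path_edges (pstar i) \<inter> Ej (Suc j) \<noteq> {}}"
    have AB: "A \<subseteq> B"
    proof
      fix i assume "i \<in> A"
      then obtain e where i: "i < N" and e: "e \<in> path_edges (p i)" "e \<in> Ej j"
        unfolding A_def by auto
      have "?C \<le> player_cost N p i + j"
        using cong_le_player[of e p i N] e(1) e(2) unfolding Ej_def player_cost_def by auto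
      let ?q = "pstar i"
      have q: "?q \<in> P i" using psP i .
      have lenq: "path_len ?q + j < ?C"
      proof (cases "path_edges ?q = {}")
        case True thus ?thesis using pe_empty[OF True] jC by simp
      next
        case False
        then obtain e' where e': "e' \<in> path_edges ?q" by auto
        have "e' \<in> E" using pe_sub[of V E "src i" "dst i" ?q] e' rg(3)[OF i] q by blast
        have "1 \<le> edge_cong N pstar e'"
        proof -
          have "{i} \<subseteq> {i'. i' < N \<and> e' \<in> path_edges (pstar i')}" using i e' by auto
          hence "card {i} \<le> card {i'. i' < N \<and> e' \<in> path_edges (pstar i')}"
            by (intro card_mono) auto
          thus ?thesis unfolding edge_cong_def by simp
        qed
        hence Cs1: "1 \<le> ?Cs" using edge_cong_le[OF fE \<open>e' \<in> E\<close>, of N pstar] by linarith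
        have "path_len ?q \<le> ?L" using lenL i q .
        show ?thesis
        proof (cases "?L = 0")
          case True thus ?thesis using \<open>path_len ?q \<le> ?L\<close> jC by simp
        next
          case False
          have "?L \<le> ?L * ?Cs" using Cs1 by simp
          hence "?L < 2 * ?L * ?Cs" using False by linarith
          thus ?thesis using \<open>path_len ?q \<le> ?L\<close> CjL by linarith
        qed
      qed
      have "?C \<le> player_cost N (p(i:=?q)) i + j" using nash[OF i q] \<open>?C \<le> player_cost N p i + j\<close> by linarith
      hence pc: "?C \<le> player_cong N (p(i:=?q)) i + j" using lenq unfolding player_cost_def by auto
      obtain e' where e': "e' \<in> path_edges ?q" "?C - j \<le> edge_cong N (p(i:=?q)) e'"
      proof -
        have "?C - j \<le> player_cong N (p(i:=?q)) i" using pc by linarith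
        moreover have "0 < ?C - j" using jC by simp
        ultimately obtain e' where "e' \<in> path_edges ((p(i:=?q)) i)" "?C - j \<le> edge_cong N (p(i:=?q)) e'"
          using player_cong_witness[of "?C - j" N "p(i:=?q)" i] by blast
        thus ?thesis using that by simp
      qed
      have "e' \<in> E" using pe_sub[of V E "src i" "dst i" ?q] e'(1) rg(3)[OF i] q by blast
      hence "e' \<in> Ej (Suc j)" using e'(2) edge_cong_upd[of N p i ?q e'] unfolding Ej_def by auto
      thus "i \<in> B" using e'(1) i unfolding B_def by auto
    qed
    have cB: "card B \<le> card (Ej (Suc j)) * ?Cs"
    proof -
      have "B \<subseteq> (\<Union>e\<in>Ej (Suc j). {i. i<N \<and> e \<in> path_edges (pstar i)})" unfolding B_def by auto
      hence "card B \<le> card (\<Union>e\<in>Ej (Suc j). {i. i<N \<and> e \<in> path_edges (pstar i)})"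
        using fEj by (intro card_mono) auto
      also have "\<dots> \<le> (\<Sum>e\<in>Ej (Suc j). card {i. i<N \<and> e \<in> path_edges (pstar i)})"
        by (rule card_UN_le[OF fEj])
      also have "\<dots> \<le> card (Ej (Suc j)) * ?Cs"
      proof (rule sum_bounded_above[where K = "?Cs", simplified])
        fix e assume "e \<in> Ej (Suc j)"
        hence "e \<in> E" unfolding Ej_def by auto
        thus "card {i. i<N \<and> e \<in> path_edges (pstar i)} \<le> ?Cs"
          using edge_cong_le[OF fE, of e N pstar] unfolding edge_cong_def by simp
      qed
      finally show ?thesis .
    qed
    have "card (Ej j) * (?C - j) \<le> (\<Sum>e\<in>Ej j. edge_cong N p e)"
      using sum_bounded_below[of "Ej j" "?C - j" "edge_cong N p"] unfolding Ej_def by force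
    also have "\<dots> = (\<Sum>i<N. card (Ej j \<inter> path_edges (p i)))" by (rule double_count[OF fEj])
    also have "\<dots> = (\<Sum>i\<in>A. card (Ej j \<inter> path_edges (p i)))"
      by (rule sum.mono_neutral_right) (auto simp: A_def)
    also have "\<dots> \<le> card A * ?D"
    proof (rule sum_bounded_above[where K = "?D", simplified])
      fix i assume "i \<in> A"
      hence "i < N" unfolding A_def by auto
      have "card (Ej j \<inter> path_edges (p i)) \<le> card (path_edges (p i))" by (intro card_mono) auto
      also have "\<dots> \<le> ?D" using card_pe lenD[OF \<open>i<N\<close>] le_trans by blast
      finally show "card (Ej j \<inter> path_edges (p i)) \<le> ?D" .
    qed
    also have "\<dots> \<le> card B * ?D"
      using AB by (intro mult_le_mono1 card_mono) (auto simp: B_def)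
    also have "\<dots> \<le> card (Ej (Suc j)) * ?Cs * ?D" using cB by (intro mult_le_mono1)
    finally show "card (Ej j) * (?C - j) \<le> card (Ej (Suc j)) * ?Cs * ?D" .
  qed
  have pow: "real k \<le> 2 * log 2 ?n + 1 \<Longrightarrow> 2 ^ k \<le> card (Ej k)" for k
  proof (induction k)
    case 0
    have "?C \<in> insert 0 (edge_cong N p ` E)" unfolding congestion_def by (rule Max_in) (use fE in auto)
    moreover have "?C \<noteq> 0" using Cbig logn by linarith
    ultimately obtain e where "e \<in> E" "edge_cong N p e = ?C" by auto
    hence "Ej 0 \<noteq> {}" unfolding Ej_def by auto
    thus ?case using fEj by (simp add: Suc_le_eq card_gt_0_iff)
  next
    case (Suc k)
    have hk: "real k \<le> 2 * log 2 ?n" using Suc.prems by simp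
    have IH: "2 ^ k \<le> card (Ej k)" using Suc.IH Suc.prems by simp
    let ?X = "card (Ej k)" and ?Y = "card (Ej (Suc k))" and ?M = "?Cs * ?D"
    have s: "?X * (?C - k) \<le> ?Y * ?M" using step[OF hk] by (simp add: mult.assoc)
    have "2 * ?M \<le> ?C - k"
    proof -
      have "?Cs * ?D \<le> ?Cs * ?L" using DL by simp
      hence "2 * (?Cs * ?D) \<le> 2 * ?L * ?Cs" by (simp add: mult.commute mult.left_commute)
      thus ?thesis using CjL[OF hk] by linarith
    qed
    hence "?X * (2 * ?M) \<le> ?X * (?C - k)" by (rule mult_le_mono2)
    hence "?X * (2 * ?M) \<le> ?Y * ?M" using s by (rule le_trans)
    hence s2: "(2 * ?X) * ?M \<le> ?Y * ?M" by (simp only: ac_simps)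
    have "?M > 0"
    proof (rule ccontr)
      assume "\<not> ?M > 0"
      hence "?M = 0" by simp
      hence "?Y * ?M = 0" by (simp only: mult_0_right)
      hence "?X * (?C - k) = 0" using s by (simp only: le_zero_eq)
      moreover have "?X > 0" proof -
      have "(1::nat) \<le> 2 ^ k" by simp
      thus ?thesis using IH by linarith
    qed
      ultimately show False using jC[OF hk] by simp
    qed
    hence "2 * ?X \<le> ?Y" using s2 by simp
    thus ?case using IH by simp
  qed
  define k where "k = nat \<lfloor>2 * log 2 ?n\<rfloor> + 1"
  have k1: "real k \<le> 2 * log 2 ?n + 1" and k2: "2 * log 2 ?n < real k"
    unfolding k_def using logn by linarith+
  have "card (Ej k) \<le> card E" using fE unfolding Ej_def by (intro card_mono) auto
  also have "\<dots> \<le> ?n ^ 2" by (rule card_E_le[OF rg(1)])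
  finally have "2 ^ k \<le> ?n ^ 2" using pow[OF k1] by linarith
  hence "(2::real) powr real k \<le> real ?n ^ 2" by (simp add: powr_realpow flip: of_nat_power)
  moreover have "real ?n ^ 2 = 2 powr (2 * log 2 ?n)"
    proof -
    have "2 powr (2 * log 2 ?n) = (2 powr (log 2 ?n)) powr 2" by (simp add: powr_powr mult.commute)
    also have "\<dots> = real ?n powr 2" using assms(2) by simp
    also have "\<dots> = real ?n ^ 2" using assms(2) by (simp add: powr_realpow)
    finally show ?thesis by simp
  qed
  moreover have "(2::real) powr (2 * log 2 ?n) < 2 powr real k" using k2 by simp
  ultimately show False by linarith
qed

end
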